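(* Let $\mathcal{M}$ be a topological space, $T:\mathcal{M}\to\mathcal{M}$ a map, and $\mu$ a positive measure on $\mathcal{M}$ such that $\phi\mapsto\phi\circ T$ is a well-defined operator $\mathcal{K}:L_2(\mu)\to L_2(\mu)$, and assume $\mathcal{K}$ is bounded. Let $(\psi_i)_{i=1}^\infty$ be an orthonormal basis of $L_2(\mu)$, $\mathcal{F}_N=\mathrm{span}\{\psi_1,\dots,\psi_N\}$, $P_N^\mu$ the $L_2(\mu)$-orthogonal projection onto $\mathcal{F}_N$, and $\mathcal{K}_N=P_N^\mu\mathcal{K}|_{\mathcal{F}_N}:\mathcal{F}_N\to\mathcal{F}_N$. Let $f\in L_2(\mu)^n$ be a vector observable (operators acting componentwise). Then for every $\Omega\in\mathbb{N}$, \[ \lim_{N\to\infty}\sup_{i\in\{1,\dots,\Omega\}}\|(\mathcal{K}_N)^iP_N^\mu f-\mathcal{K}^if\|=0. \] In particular, if $f\in\mathcal{F}_{N_0}^n$ for some $N_0\in\mathbb{N}$, then \[ \lim_{N\to\infty}\sup_{i\in\{1,\dots,\Omega\}}\|(\mathcal{K}_N)^if-\mathcal{K}^if\|=0. \]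
   Context: $\mathcal{K}\phi=\phi\circ T$ is the Koopman operator. For $f=(f_1,\dots,f_n)\in L_2(\mu)^n$, $\|f\|:=\sum_{i=1}^n\|f_i\|_{L_2(\mu)}$. *)

theory Defs
  imports "HOL-Analysis.Analysis"
begin

text \<open>Square-integrable complex-valued functions (representatives of elements of L2(mu)).\<close>
definition L2 :: "'a measure \<Rightarrow> ('a \<Rightarrow> complex) set" where
  "L2 M = {f \<in> borel_measurable M. integrable M (\<lambda>x. (cmod (f x))\<^sup>2)}"

definition l2norm :: "'a measure \<Rightarrow> ('a \<Rightarrow> complex) \<Rightarrow> real" where
  "l2norm M f = sqrt (\<integral>x. (cmod (f x))\<^sup>2 \<partial>M)"

definition l2inner :: "'a measure \<Rightarrow> ('a \<Rightarrow> complex) \<Rightarrow> ('a \<Rightarrow> complex) \<Rightarrow> complex" where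
  "l2inner M f g = (\<integral>x. f x * cnj (g x) \<partial>M)"

definition koopman :: "('a \<Rightarrow> 'a) \<Rightarrow> ('a \<Rightarrow> complex) \<Rightarrow> ('a \<Rightarrow> complex)" where
  "koopman T \<phi> = \<phi> \<circ> T"

definition koopman_L2_bounded :: "'a measure \<Rightarrow> ('a \<Rightarrow> 'a) \<Rightarrow> bool" where
  "koopman_L2_bounded M T \<longleftrightarrow>
     T \<in> measurable M M \<and>
     (\<forall>\<phi>\<in>L2 M. koopman T \<phi> \<in> L2 M) \<and>
     (\<forall>\<phi>\<in>L2 M. \<forall>\<psi>\<in>L2 M. (AE x in M. \<phi> x = \<psi> x) \<longrightarrow>
         (AE x in M. koopman T \<phi> x = koopman T \<psi> x)) \<and>
     (\<exists>C. \<forall>\<phi>\<in>L2 M. l2norm M (koopman T \<phi>) \<le> C * l2norm M \<phi>)"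

text \<open>An orthonormal basis (psi_i), indexed from 0, of L2(M): orthonormal and with dense span.\<close>
definition orthonormal_basis_L2 :: "'a measure \<Rightarrow> (nat \<Rightarrow> 'a \<Rightarrow> complex) \<Rightarrow> bool" where
  "orthonormal_basis_L2 M \<psi> \<longleftrightarrow>
     (\<forall>i. \<psi> i \<in> L2 M) \<and>
     (\<forall>i j. l2inner M (\<psi> i) (\<psi> j) = (if i = j then 1 else 0)) \<and>
     (\<forall>f\<in>L2 M. \<forall>\<epsilon>>0. \<exists>N c. l2norm M (\<lambda>x. f x - (\<Sum>i<N. c i * \<psi> i x)) < \<epsilon>)"

text \<open>Orthogonal projection onto F_N = span {psi_i | i < N} (for an orthonormal family).\<close>
definition projN :: "'a measure \<Rightarrow> (nat \<Rightarrow> 'a \<Rightarrow> complex) \<Rightarrow> nat \<Rightarrow> ('a \<Rightarrow> complex) \<Rightarrow> ('a \<Rightarrow> complex)" where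
  "projN M \<psi> N f = (\<lambda>x. \<Sum>i<N. l2inner M f (\<psi> i) * \<psi> i x)"

definition koopmanN :: "'a measure \<Rightarrow> (nat \<Rightarrow> 'a \<Rightarrow> complex) \<Rightarrow> ('a \<Rightarrow> 'a) \<Rightarrow> nat \<Rightarrow> ('a \<Rightarrow> complex) \<Rightarrow> ('a \<Rightarrow> complex)" where
  "koopmanN M \<psi> T N g = projN M \<psi> N (koopman T g)"

definition inFN :: "'a measure \<Rightarrow> (nat \<Rightarrow> 'a \<Rightarrow> complex) \<Rightarrow> nat \<Rightarrow> ('a \<Rightarrow> complex) \<Rightarrow> bool" where
  "inFN M \<psi> N g \<longleftrightarrow> (\<exists>c. AE x in M. g x = (\<Sum>i<N. c i * \<psi> i x))"

definition vnorm :: "'a measure \<Rightarrow> nat \<Rightarrow> (nat \<Rightarrow> 'a \<Rightarrow> complex) \<Rightarrow> real" where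
  "vnorm M n f = (\<Sum>j<n. l2norm M (f j))"

end

theory Submission
  imports Defs
begin

lemma p1: "(cmod (a + b))\<^sup>2 \<le> 2 * (cmod a)\<^sup>2 + 2 * (cmod b)\<^sup>2"
proof -
  have "cmod (a+b) \<le> cmod a + cmod b" by (rule norm_triangle_ineq)
  hence "(cmod (a+b))\<^sup>2 \<le> (cmod a + cmod b)\<^sup>2" by (simp add: power_mono)
  also have "\<dots> \<le> 2 * (cmod a)\<^sup>2 + 2 * (cmod b)\<^sup>2"
  proof -
    have "0 \<le> (cmod a - cmod b)\<^sup>2" by simp
    then show ?thesis unfolding power2_diff power2_sum by linarith
  qed
  finally show ?thesis .
qed

lemma p2: "cmod (a * cnj b) \<le> (cmod a)\<^sup>2 + (cmod b)\<^sup>2"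
proof -
  have "cmod (a * cnj b) = cmod a * cmod b" by (simp add: norm_mult)
  also have "\<dots> \<le> (cmod a)\<^sup>2 + (cmod b)\<^sup>2"
  proof -
    have "0 \<le> (cmod a - cmod b)\<^sup>2" by simp
    moreover have "0 \<le> cmod a * cmod b" by simp
    ultimately show ?thesis unfolding power2_diff by linarith
  qed
  finally show ?thesis .
qed

lemma p3: "(cmod (a + b))\<^sup>2 = (cmod a)\<^sup>2 + (cmod b)\<^sup>2 + 2 * Re (a * cnj b)"
  unfolding cmod_power2 by (simp add: power2_eq_square algebra_simps)

lemma cnj_meas[measurable]: "cnj \<in> borel_measurable borel"
  by (intro borel_measurable_continuous_onI continuous_intros)

lemma L2_meas: "f \<in> L2 M \<Longrightarrow> f \<in> borel_measurable M" by (simp add: L2_def)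
lemma L2_int: "f \<in> L2 M \<Longrightarrow> integrable M (\<lambda>x. (cmod (f x))\<^sup>2)" by (simp add: L2_def)

lemma L2_add: assumes "f \<in> L2 M" "g \<in> L2 M" shows "(\<lambda>x. f x + g x) \<in> L2 M"
proof -
  have [measurable]: "f \<in> borel_measurable M" "g \<in> borel_measurable M" using assms by (auto simp: L2_def)
  have m: "(\<lambda>x. f x + g x) \<in> borel_measurable M" by measurable
  have "integrable M (\<lambda>x. 2 * (cmod (f x))\<^sup>2 + 2 * (cmod (g x))\<^sup>2)"
    using assms by (simp add: L2_def)
  then have "integrable M (\<lambda>x. (cmod (f x + g x))\<^sup>2)"
  proof (rule Bochner_Integration.integrable_bound)
    show "(\<lambda>x. (cmod (f x + g x))\<^sup>2) \<in> borel_measurable M" using m by measurable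
    show "AE x in M. norm ((cmod (f x + g x))\<^sup>2) \<le> norm (2 * (cmod (f x))\<^sup>2 + 2 * (cmod (g x))\<^sup>2)"
    proof (rule AE_I2)
      fix x have "norm ((cmod (f x + g x))\<^sup>2) = (cmod (f x + g x))\<^sup>2" by simp
      also have "\<dots> \<le> 2 * (cmod (f x))\<^sup>2 + 2 * (cmod (g x))\<^sup>2" by (rule p1)
      also have "\<dots> \<le> norm (2 * (cmod (f x))\<^sup>2 + 2 * (cmod (g x))\<^sup>2)" by (metis abs_ge_self real_norm_def)
      finally show "norm ((cmod (f x + g x))\<^sup>2) \<le> norm (2 * (cmod (f x))\<^sup>2 + 2 * (cmod (g x))\<^sup>2)" .
    qed
  qed
  then show ?thesis using m by (simp add: L2_def)
qed

lemma L2_cmult: assumes "f \<in> L2 M" shows "(\<lambda>x. c * f x) \<in> L2 M"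
proof -
  have [measurable]: "f \<in> borel_measurable M" using assms by (auto simp: L2_def)
  have m: "(\<lambda>x. c * f x) \<in> borel_measurable M" by measurable
  have "integrable M (\<lambda>x. (cmod c)\<^sup>2 * (cmod (f x))\<^sup>2)"
    using assms by (simp add: L2_def)
  then have "integrable M (\<lambda>x. (cmod (c * f x))\<^sup>2)"
    by (simp add: norm_mult power_mult_distrib)
  then show ?thesis using m by (simp add: L2_def)
qed

lemma L2_diff: assumes "f \<in> L2 M" "g \<in> L2 M" shows "(\<lambda>x. f x - g x) \<in> L2 M"
  using L2_add[OF assms(1) L2_cmult[OF assms(2), of "-1"]] by simp

lemma L2_sum: assumes "\<And>i. i \<in> I \<Longrightarrow> g i \<in> L2 M" shows "(\<lambda>x. \<Sum>i\<in>I. c i * g i x) \<in> L2 M"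
  using assms
proof (induction I rule: infinite_finite_induct)
  case (infinite A)
  then show ?case by (simp add: L2_def)
next
  case empty
  then show ?case by (simp add: L2_def)
next
  case (insert a A)
  then show ?case by (simp add: L2_add L2_cmult)
qed

lemma int_prod: assumes "f \<in> L2 M" "g \<in> L2 M" shows "integrable M (\<lambda>x. f x * cnj (g x))"
proof -
  have [measurable]: "f \<in> borel_measurable M" "g \<in> borel_measurable M" using assms by (auto simp: L2_def)
  have m: "(\<lambda>x. f x * cnj (g x)) \<in> borel_measurable M" by measurable
  have "integrable M (\<lambda>x. (cmod (f x))\<^sup>2 + (cmod (g x))\<^sup>2)"
    using assms by (simp add: L2_def)
  then show ?thesis
  proof (rule Bochner_Integration.integrable_bound)
    show "(\<lambda>x. f x * cnj (g x)) \<in> borel_measurable M" by (rule m)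
    show "AE x in M. norm (f x * cnj (g x)) \<le> norm ((cmod (f x))\<^sup>2 + (cmod (g x))\<^sup>2)"
    proof (rule AE_I2)
      fix x have "norm (f x * cnj (g x)) \<le> (cmod (f x))\<^sup>2 + (cmod (g x))\<^sup>2" by (rule p2)
      also have "\<dots> \<le> norm ((cmod (f x))\<^sup>2 + (cmod (g x))\<^sup>2)" by (metis abs_ge_self real_norm_def)
      finally show "norm (f x * cnj (g x)) \<le> norm ((cmod (f x))\<^sup>2 + (cmod (g x))\<^sup>2)" .
    qed
  qed
qed

definition nsq :: "'a measure \<Rightarrow> ('a \<Rightarrow> complex) \<Rightarrow> real" where
  "nsq M f = (\<integral>x. (cmod (f x))\<^sup>2 \<partial>M)"

lemma nsq_nonneg: "nsq M f \<ge> 0"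
  unfolding nsq_def by (rule integral_nonneg_AE) auto

lemma l2norm_nsq: "l2norm M f = sqrt (nsq M f)"
  by (simp add: l2norm_def nsq_def)

lemma nsq_l2norm: "nsq M f = (l2norm M f)\<^sup>2"
  by (simp add: l2norm_nsq nsq_nonneg)

lemma int3: fixes A B R :: "'a \<Rightarrow> real"
  assumes "integrable M A" "integrable M B" "integrable M R"
  shows "(\<integral>x. A x + B x + 2 * R x \<partial>M) = integral\<^sup>L M A + integral\<^sup>L M B + 2 * integral\<^sup>L M R"
  using assms by simp

lemma nsq_add: assumes "a \<in> L2 M" "b \<in> L2 M"
  shows "nsq M (\<lambda>x. a x + b x) = nsq M a + nsq M b + 2 * Re (l2inner M a b)"
proof -
  have ia: "integrable M (\<lambda>x. (cmod (a x))\<^sup>2)" "integrable M (\<lambda>x. (cmod (b x))\<^sup>2)"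
    using assms by (auto simp: L2_def)
  have ip: "integrable M (\<lambda>x. a x * cnj (b x))" using int_prod[OF assms] .
  have ir: "integrable M (\<lambda>x. Re (a x * cnj (b x)))" by (rule integrable_bounded_linear[OF bounded_linear_Re ip])
  have "nsq M (\<lambda>x. a x + b x) = (\<integral>x. (cmod (a x))\<^sup>2 + (cmod (b x))\<^sup>2 + 2 * Re (a x * cnj (b x)) \<partial>M)"
    unfolding nsq_def by (simp add: p3)
  also have "\<dots> = nsq M a + nsq M b + 2 * (\<integral>x. Re (a x * cnj (b x)) \<partial>M)"
    unfolding nsq_def by (rule int3[OF ia(1) ia(2) ir])
  also have "(\<integral>x. Re (a x * cnj (b x)) \<partial>M) = Re (l2inner M a b)"
    unfolding l2inner_def using integral_Re[OF ip] by simp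
  finally show ?thesis .
qed

lemma pyth: assumes "a \<in> L2 M" "b \<in> L2 M" "l2inner M a b = 0"
  shows "nsq M (\<lambda>x. a x + b x) = nsq M a + nsq M b"
  using nsq_add[OF assms(1,2)] assms(3) by simp

lemma nsq_le2: assumes "a \<in> L2 M" "b \<in> L2 M"
  shows "nsq M (\<lambda>x. a x + b x) \<le> 2 * nsq M a + 2 * nsq M b"
proof -
  have "integrable M (\<lambda>x. (cmod (a x + b x))\<^sup>2)" using L2_add[OF assms] by (simp add: L2_def)
  moreover have "integrable M (\<lambda>x. 2 * (cmod (a x))\<^sup>2 + 2 * (cmod (b x))\<^sup>2)"
    using assms by (simp add: L2_def)
  ultimately have "nsq M (\<lambda>x. a x + b x) \<le> (\<integral>x. 2 * (cmod (a x))\<^sup>2 + 2 * (cmod (b x))\<^sup>2 \<partial>M)"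
    unfolding nsq_def by (intro integral_mono) (auto simp: p1)
  also have "\<dots> = 2 * nsq M a + 2 * nsq M b" using assms by (simp add: L2_def nsq_def)
  finally show ?thesis .
qed

lemma nsq_sym: "nsq M (\<lambda>x. a x - b x) = nsq M (\<lambda>x. b x - a x)"
  unfolding nsq_def by (simp add: norm_minus_commute)

lemma inner_diff_left: assumes "a \<in> L2 M" "b \<in> L2 M" "w \<in> L2 M"
  shows "l2inner M (\<lambda>x. a x - b x) w = l2inner M a w - l2inner M b w"
  unfolding l2inner_def using int_prod[OF assms(1,3)] int_prod[OF assms(2,3)]
  by (simp add: left_diff_distrib)

lemma inner_sum_right: assumes "a \<in> L2 M" "\<And>i. i \<in> I \<Longrightarrow> g i \<in> L2 M"
  shows "l2inner M a (\<lambda>x. \<Sum>i\<in>I. d i * g i x) = (\<Sum>i\<in>I. cnj (d i) * l2inner M a (g i))"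
proof -
  have "l2inner M a (\<lambda>x. \<Sum>i\<in>I. d i * g i x) = (\<integral>x. (\<Sum>i\<in>I. cnj (d i) * (a x * cnj (g i x))) \<partial>M)"
    unfolding l2inner_def by (simp add: sum_distrib_left mult.left_commute)
  also have "\<dots> = (\<Sum>i\<in>I. cnj (d i) * l2inner M a (g i))"
    unfolding l2inner_def using int_prod[OF assms(1) assms(2)]
    by (subst Bochner_Integration.integral_sum) auto
  finally show ?thesis .
qed

lemma inner_sum_left: assumes "w \<in> L2 M" "\<And>i. i \<in> I \<Longrightarrow> g i \<in> L2 M"
  shows "l2inner M (\<lambda>x. \<Sum>i\<in>I. d i * g i x) w = (\<Sum>i\<in>I. d i * l2inner M (g i) w)"
proof -
  have "l2inner M (\<lambda>x. \<Sum>i\<in>I. d i * g i x) w = (\<integral>x. (\<Sum>i\<in>I. d i * (g i x * cnj (w x))) \<partial>M)"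
    unfolding l2inner_def by (simp add: sum_distrib_right mult.assoc)
  also have "\<dots> = (\<Sum>i\<in>I. d i * l2inner M (g i) w)"
    unfolding l2inner_def using int_prod[OF assms(2) assms(1)]
    by (subst Bochner_Integration.integral_sum) auto
  finally show ?thesis .
qed

lemma inner_cong_AE: assumes "a \<in> L2 M" "b \<in> L2 M" "w \<in> L2 M" "AE x in M. a x = b x"
  shows "l2inner M a w = l2inner M b w"
  unfolding l2inner_def
proof (rule integral_cong_AE)
  show "(\<lambda>x. a x * cnj (w x)) \<in> borel_measurable M"
    using int_prod[OF assms(1,3)] by auto
  show "(\<lambda>x. b x * cnj (w x)) \<in> borel_measurable M"
    using int_prod[OF assms(2,3)] by auto
  show "AE x in M. a x * cnj (w x) = b x * cnj (w x)" using assms(4) by auto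
qed

lemma proj_L2: assumes "\<forall>i. \<psi> i \<in> L2 M" shows "projN M \<psi> N u \<in> L2 M"
  unfolding projN_def using assms by (intro L2_sum) auto

lemma comb_L2: assumes "\<forall>i. \<psi> i \<in> L2 M" shows "(\<lambda>x. \<Sum>i\<in>I. c i * \<psi> i x) \<in> L2 M"
  using assms by (intro L2_sum) auto

lemma comb_inner: fixes \<psi> :: "nat \<Rightarrow> 'a \<Rightarrow> complex" assumes "\<forall>i. \<psi> i \<in> L2 M" "\<forall>i j. l2inner M (\<psi> i) (\<psi> j) = (if i = j then 1 else 0)"
    "k < N"
  shows "l2inner M (\<lambda>x. \<Sum>i<N. c i * \<psi> i x) (\<psi> k) = c k"
proof -
  have "l2inner M (\<lambda>x. \<Sum>i<N. c i * \<psi> i x) (\<psi> k) = (\<Sum>i<N. c i * l2inner M (\<psi> i) (\<psi> k))"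
    using assms(1) by (intro inner_sum_left) auto
  also have "\<dots> = (\<Sum>i<N. if i = k then c i else 0)"
    using assms(2) by (intro sum.cong) auto
  also have "\<dots> = c k" using assms(3) by (subst sum.delta) simp_all
  finally show ?thesis .
qed

lemma proj_inner: assumes "\<forall>i. \<psi> i \<in> L2 M" "\<forall>i j. l2inner M (\<psi> i) (\<psi> j) = (if i = j then 1 else 0)"
    "k < N"
  shows "l2inner M (projN M \<psi> N u) (\<psi> k) = l2inner M u (\<psi> k)"
  unfolding projN_def by (rule comb_inner[OF assms])

lemma orth: assumes "\<forall>i. \<psi> i \<in> L2 M" "\<forall>i j. l2inner M (\<psi> i) (\<psi> j) = (if i = j then 1 else 0)"
    "u \<in> L2 M"
  shows "l2inner M (\<lambda>x. u x - projN M \<psi> N u x) (\<lambda>x. \<Sum>i<N. d i * \<psi> i x) = 0"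
proof -
  have du: "(\<lambda>x. u x - projN M \<psi> N u x) \<in> L2 M" using assms by (intro L2_diff proj_L2) auto
  have "l2inner M (\<lambda>x. u x - projN M \<psi> N u x) (\<lambda>x. \<Sum>i<N. d i * \<psi> i x)
     = (\<Sum>i<N. cnj (d i) * l2inner M (\<lambda>x. u x - projN M \<psi> N u x) (\<psi> i))"
    using du assms(1) by (intro inner_sum_right) auto
  also have "\<dots> = 0"
  proof (rule sum.neutral, intro ballI)
    fix i assume i: "i \<in> {..<N}"
    have "l2inner M (\<lambda>x. u x - projN M \<psi> N u x) (\<psi> i) = l2inner M u (\<psi> i) - l2inner M (projN M \<psi> N u) (\<psi> i)"
      using assms by (intro inner_diff_left proj_L2) auto
    also have "\<dots> = 0" using proj_inner[OF assms(1,2), of i N u] i by simp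
    finally show "cnj (d i) * l2inner M (\<lambda>x. u x - projN M \<psi> N u x) (\<psi> i) = 0" by simp
  qed
  finally show ?thesis .
qed

lemma bessel: assumes "\<forall>i. \<psi> i \<in> L2 M" "\<forall>i j. l2inner M (\<psi> i) (\<psi> j) = (if i = j then 1 else 0)"
    "u \<in> L2 M"
  shows "nsq M (projN M \<psi> N u) \<le> nsq M u"
proof -
  have du: "(\<lambda>x. u x - projN M \<psi> N u x) \<in> L2 M" using assms by (intro L2_diff proj_L2) auto
  have pu: "projN M \<psi> N u \<in> L2 M" using assms by (intro proj_L2) auto
  have "l2inner M (\<lambda>x. u x - projN M \<psi> N u x) (projN M \<psi> N u) = 0"
    using orth[OF assms, of N "\<lambda>i. l2inner M u (\<psi> i)"] by (simp add: projN_def)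
  then have "nsq M (\<lambda>x. (u x - projN M \<psi> N u x) + projN M \<psi> N u x) = nsq M (\<lambda>x. u x - projN M \<psi> N u x) + nsq M (projN M \<psi> N u)"
    using pyth[OF du pu] by simp
  then have "nsq M u = nsq M (\<lambda>x. u x - projN M \<psi> N u x) + nsq M (projN M \<psi> N u)" by simp
  then show ?thesis using nsq_nonneg[of M "\<lambda>x. u x - projN M \<psi> N u x"] by linarith
qed

lemma best: assumes "\<forall>i. \<psi> i \<in> L2 M" "\<forall>i j. l2inner M (\<psi> i) (\<psi> j) = (if i = j then 1 else 0)"
    "u \<in> L2 M" "N \<le> K"
  shows "nsq M (\<lambda>x. u x - projN M \<psi> K u x) \<le> nsq M (\<lambda>x. u x - (\<Sum>i<N. c i * \<psi> i x))"
proof -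
  define c' where "c' i = (if i < N then c i else 0)" for i
  have hs: "(\<Sum>i<K. c' i * \<psi> i x) = (\<Sum>i<N. c i * \<psi> i x)" for x
    using assms(4) by (intro sum.mono_neutral_cong_right) (auto simp: c'_def)
  have du: "(\<lambda>x. u x - projN M \<psi> K u x) \<in> L2 M" using assms by (intro L2_diff proj_L2) auto
  have dv: "(\<lambda>x. projN M \<psi> K u x - (\<Sum>i<N. c i * \<psi> i x)) \<in> L2 M"
    using assms by (intro L2_diff proj_L2 comb_L2) auto
  have e: "(\<lambda>x. projN M \<psi> K u x - (\<Sum>i<N. c i * \<psi> i x)) = (\<lambda>x. \<Sum>i<K. (l2inner M u (\<psi> i) - c' i) * \<psi> i x)"
    by (simp add: projN_def hs[symmetric] sum_subtractf left_diff_distrib)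
  have "l2inner M (\<lambda>x. u x - projN M \<psi> K u x) (\<lambda>x. projN M \<psi> K u x - (\<Sum>i<N. c i * \<psi> i x)) = 0"
    unfolding e by (rule orth[OF assms(1-3)])
  then have "nsq M (\<lambda>x. (u x - projN M \<psi> K u x) + (projN M \<psi> K u x - (\<Sum>i<N. c i * \<psi> i x)))
     = nsq M (\<lambda>x. u x - projN M \<psi> K u x) + nsq M (\<lambda>x. projN M \<psi> K u x - (\<Sum>i<N. c i * \<psi> i x))"
    using pyth[OF du dv] by simp
  then have "nsq M (\<lambda>x. u x - (\<Sum>i<N. c i * \<psi> i x))
     = nsq M (\<lambda>x. u x - projN M \<psi> K u x) + nsq M (\<lambda>x. projN M \<psi> K u x - (\<Sum>i<N. c i * \<psi> i x))"
    by simp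
  then show ?thesis using nsq_nonneg[of M "\<lambda>x. projN M \<psi> K u x - (\<Sum>i<N. c i * \<psi> i x)"] by linarith
qed

lemma approx: assumes "orthonormal_basis_L2 M \<psi>" "u \<in> L2 M"
  shows "(\<lambda>N. nsq M (\<lambda>x. u x - projN M \<psi> N u x)) \<longlonglongrightarrow> 0"
proof (rule LIMSEQ_I)
  have A: "\<forall>i. \<psi> i \<in> L2 M" "\<forall>i j. l2inner M (\<psi> i) (\<psi> j) = (if i = j then 1 else 0)"
    and D: "\<forall>f\<in>L2 M. \<forall>\<epsilon>>0. \<exists>N c. l2norm M (\<lambda>x. f x - (\<Sum>i<N. c i * \<psi> i x)) < \<epsilon>"
    using assms(1) unfolding orthonormal_basis_L2_def by auto
  fix r :: real assume r: "0 < r"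
  then obtain N c where Nc: "l2norm M (\<lambda>x. u x - (\<Sum>i<N. c i * \<psi> i x)) < sqrt r"
    using D assms(2) by (meson real_sqrt_gt_zero)
  then have lt: "nsq M (\<lambda>x. u x - (\<Sum>i<N. c i * \<psi> i x)) < r"
    unfolding l2norm_nsq using real_sqrt_less_iff by blast
  show "\<exists>no. \<forall>n\<ge>no. norm (nsq M (\<lambda>x. u x - projN M \<psi> n u x) - 0) < r"
  proof (intro exI allI impI)
    fix n assume "N \<le> n"
    then have "nsq M (\<lambda>x. u x - projN M \<psi> n u x) \<le> nsq M (\<lambda>x. u x - (\<Sum>i<N. c i * \<psi> i x))"
      by (rule best[OF A assms(2)])
    then show "norm (nsq M (\<lambda>x. u x - projN M \<psi> n u x) - 0) < r"
      using lt nsq_nonneg[of M "\<lambda>x. u x - projN M \<psi> n u x"] by simp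
  qed
qed

lemma proj_diff: assumes "\<forall>i. \<psi> i \<in> L2 M" "u \<in> L2 M" "v \<in> L2 M"
  shows "projN M \<psi> N (\<lambda>x. u x - v x) = (\<lambda>x. projN M \<psi> N u x - projN M \<psi> N v x)"
  unfolding projN_def using assms
  by (simp add: inner_diff_left sum_subtractf left_diff_distrib)

lemma koop_diff: "koopman T (\<lambda>x. a x - b x) = (\<lambda>x. koopman T a x - koopman T b x)"
  by (simp add: koopman_def comp_def)

lemma koop_iter_L2: assumes "\<forall>\<phi>\<in>L2 M. koopman T \<phi> \<in> L2 M" "f \<in> L2 M"
  shows "(koopman T ^^ i) f \<in> L2 M"
  by (induction i) (use assms in auto)

lemma koopN_iter_L2: assumes "\<forall>i. \<psi> i \<in> L2 M"
  shows "(koopmanN M \<psi> T N ^^ i) (projN M \<psi> N f) \<in> L2 M"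
  by (cases i) (auto simp: koopmanN_def intro: proj_L2[OF assms])

lemma main_conv:
  assumes ob: "orthonormal_basis_L2 M \<psi>" and KL: "\<forall>\<phi>\<in>L2 M. koopman T \<phi> \<in> L2 M"
    and C: "\<forall>\<phi>\<in>L2 M. nsq M (koopman T \<phi>) \<le> C * nsq M \<phi>" and C0: "C \<ge> 0"
    and f: "f \<in> L2 M"
  shows "(\<lambda>N. nsq M (\<lambda>x. (koopmanN M \<psi> T N ^^ i) (projN M \<psi> N f) x - (koopman T ^^ i) f x)) \<longlonglongrightarrow> 0"
proof (induction i)
  have A: "\<forall>i. \<psi> i \<in> L2 M" "\<forall>i j. l2inner M (\<psi> i) (\<psi> j) = (if i = j then 1 else 0)"
    using ob unfolding orthonormal_basis_L2_def by auto
  note A = A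
  case 0
  show ?case using approx[OF ob f] by (simp add: nsq_sym[of M "projN M \<psi> _ f"])
next
  have A: "\<forall>i. \<psi> i \<in> L2 M" "\<forall>i j. l2inner M (\<psi> i) (\<psi> j) = (if i = j then 1 else 0)"
    using ob unfolding orthonormal_basis_L2_def by auto
  case (Suc i)
  define a where "a N = (koopmanN M \<psi> T N ^^ i) (projN M \<psi> N f)" for N
  define b where "b = (koopman T ^^ i) f"
  have aL: "a N \<in> L2 M" for N unfolding a_def by (rule koopN_iter_L2[OF A(1)])
  have bL: "b \<in> L2 M" unfolding b_def by (rule koop_iter_L2[OF KL f])
  have KbL: "koopman T b \<in> L2 M" using KL bL by auto
  have bound: "nsq M (\<lambda>x. (koopmanN M \<psi> T N ^^ Suc i) (projN M \<psi> N f) x - (koopman T ^^ Suc i) f x)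
     \<le> 2 * C * nsq M (\<lambda>x. a N x - b x) + 2 * nsq M (\<lambda>x. koopman T b x - projN M \<psi> N (koopman T b) x)" for N
  proof -
    define d where "d = (\<lambda>x. a N x - b x)"
    have dL: "d \<in> L2 M" unfolding d_def using aL bL by (rule L2_diff)
    have KdL: "koopman T d \<in> L2 M" using KL dL by auto
    have KaL: "koopman T (a N) \<in> L2 M" using KL aL by auto
    have PKd: "projN M \<psi> N (koopman T d) = (\<lambda>x. projN M \<psi> N (koopman T (a N)) x - projN M \<psi> N (koopman T b) x)"
      unfolding d_def koop_diff by (rule proj_diff[OF A(1) KaL KbL])
    have eq: "(\<lambda>x. (koopmanN M \<psi> T N ^^ Suc i) (projN M \<psi> N f) x - (koopman T ^^ Suc i) f x)
       = (\<lambda>x. projN M \<psi> N (koopman T d) x + (projN M \<psi> N (koopman T b) x - koopman T b x))"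
      by (simp add: PKd a_def b_def koopmanN_def)
    have "nsq M (\<lambda>x. projN M \<psi> N (koopman T d) x + (projN M \<psi> N (koopman T b) x - koopman T b x))
       \<le> 2 * nsq M (projN M \<psi> N (koopman T d)) + 2 * nsq M (\<lambda>x. projN M \<psi> N (koopman T b) x - koopman T b x)"
      by (rule nsq_le2) (auto intro!: proj_L2[OF A(1)] L2_diff KbL)
    also have "nsq M (projN M \<psi> N (koopman T d)) \<le> nsq M (koopman T d)"
      by (rule bessel[OF A KdL])
    also have "nsq M (koopman T d) \<le> C * nsq M d" using C dL by auto
    finally show ?thesis unfolding eq d_def by (simp add: nsq_sym)
  qed
  have lim: "(\<lambda>N. 2 * C * nsq M (\<lambda>x. a N x - b x) + 2 * nsq M (\<lambda>x. koopman T b x - projN M \<psi> N (koopman T b) x)) \<longlonglongrightarrow> 2 * C * 0 + 2 * 0"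
    using Suc approx[OF ob KbL] unfolding a_def b_def by (intro tendsto_intros)
  show ?case
  proof (rule tendsto_sandwich[of "\<lambda>_. 0"])
    show "\<forall>\<^sub>F N in sequentially. 0 \<le> nsq M (\<lambda>x. (koopmanN M \<psi> T N ^^ Suc i) (projN M \<psi> N f) x - (koopman T ^^ Suc i) f x)"
      by (simp add: nsq_nonneg)
    show "\<forall>\<^sub>F N in sequentially. nsq M (\<lambda>x. (koopmanN M \<psi> T N ^^ Suc i) (projN M \<psi> N f) x - (koopman T ^^ Suc i) f x)
       \<le> 2 * C * nsq M (\<lambda>x. a N x - b x) + 2 * nsq M (\<lambda>x. koopman T b x - projN M \<psi> N (koopman T b) x)"
      using bound by simp
    show "(\<lambda>_. 0::real) \<longlonglongrightarrow> 0" by simp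
    show "(\<lambda>N. 2 * C * nsq M (\<lambda>x. a N x - b x) + 2 * nsq M (\<lambda>x. koopman T b x - projN M \<psi> N (koopman T b) x)) \<longlonglongrightarrow> 0"
      using lim by simp
  qed
qed

lemma sup_lim:
  fixes g :: "nat \<Rightarrow> nat \<Rightarrow> real"
  assumes "finite I" "I \<noteq> {}" "\<And>i. i \<in> I \<Longrightarrow> (\<lambda>N. g i N) \<longlonglongrightarrow> 0" "\<And>i N. g i N \<ge> 0"
  shows "(\<lambda>N. SUP i\<in>I. g i N) \<longlonglongrightarrow> 0"
proof (rule tendsto_sandwich[of "\<lambda>_. 0" _ _ "\<lambda>N. \<Sum>i\<in>I. g i N"])
  obtain i0 where i0: "i0 \<in> I" using assms(2) by auto
  show "\<forall>\<^sub>F N in sequentially. 0 \<le> (SUP i\<in>I. g i N)"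
  proof (intro always_eventually allI)
    fix N
    have "g i0 N \<le> (SUP i\<in>I. g i N)"
      by (rule cSUP_upper[OF i0]) (simp add: assms(1) bdd_above_finite)
    then show "0 \<le> (SUP i\<in>I. g i N)" using assms(4)[of i0 N] by linarith
  qed
  show "\<forall>\<^sub>F N in sequentially. (SUP i\<in>I. g i N) \<le> (\<Sum>i\<in>I. g i N)"
  proof (intro always_eventually allI)
    fix N show "(SUP i\<in>I. g i N) \<le> (\<Sum>i\<in>I. g i N)"
      by (rule cSUP_least[OF assms(2)]) (rule member_le_sum, auto simp: assms)
  qed
  show "(\<lambda>_. 0::real) \<longlonglongrightarrow> 0" by simp
  have "(\<lambda>N. \<Sum>i\<in>I. g i N) \<longlonglongrightarrow> (\<Sum>i\<in>I. 0)"
    by (rule tendsto_sum) (rule assms(3))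
  then show "(\<lambda>N. \<Sum>i\<in>I. g i N) \<longlonglongrightarrow> 0" by simp
qed

lemma ae_proj:
  fixes \<psi> :: "nat \<Rightarrow> 'a \<Rightarrow> complex"
  assumes A: "\<forall>i. \<psi> i \<in> L2 M" "\<forall>i j. l2inner M (\<psi> i) (\<psi> j) = (if i = j then 1 else 0)"
    and f: "f \<in> L2 M" and ae: "AE x in M. f x = (\<Sum>i<N0. c i * \<psi> i x)" and N: "N0 \<le> N"
  shows "AE x in M. f x = projN M \<psi> N f x"
proof -
  define h where "h = (\<lambda>x. \<Sum>i<N0. c i * \<psi> i x)"
  have hL: "h \<in> L2 M" unfolding h_def by (rule comb_L2[OF A(1)])
  have ip: "l2inner M f (\<psi> k) = (if k < N0 then c k else 0)" for k
  proof -
    have "l2inner M f (\<psi> k) = l2inner M h (\<psi> k)"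
      using ae A(1) by (intro inner_cong_AE[OF f hL]) (auto simp: h_def)
    also have "\<dots> = (\<Sum>i<N0. c i * l2inner M (\<psi> i) (\<psi> k))"
      unfolding h_def using A(1) by (intro inner_sum_left) auto
    also have "\<dots> = (\<Sum>i<N0. if i = k then c i else 0)"
      using A(2) by (intro sum.cong) auto
    also have "\<dots> = (if k < N0 then c k else 0)" by (subst sum.delta) simp_all
    finally show ?thesis .
  qed
  have "projN M \<psi> N f x = h x" for x
    unfolding projN_def h_def ip using N
    by (intro sum.mono_neutral_cong_right) auto
  then show ?thesis using ae by (simp add: h_def)
qed

lemma koopN_cong:
  assumes A: "\<forall>i. \<psi> i \<in> L2 M" and KL: "\<forall>\<phi>\<in>L2 M. koopman T \<phi> \<in> L2 M"
    and Kae: "\<forall>\<phi>\<in>L2 M. \<forall>\<psi>\<in>L2 M. (AE x in M. \<phi> x = \<psi> x) \<longrightarrow> (AE x in M. koopman T \<phi> x = koopman T \<psi> x)"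
    and g: "g \<in> L2 M" "g' \<in> L2 M" "AE x in M. g x = g' x"
  shows "koopmanN M \<psi> T N g = koopmanN M \<psi> T N g'"
proof -
  have "AE x in M. koopman T g x = koopman T g' x" using Kae g by blast
  then have "l2inner M (koopman T g) (\<psi> k) = l2inner M (koopman T g') (\<psi> k)" for k
    using KL g A by (intro inner_cong_AE) auto
  then show ?thesis by (simp add: koopmanN_def projN_def)
qed

theorem theorem5:
  fixes M :: "'a::topological_space measure"
    and T :: "'a \<Rightarrow> 'a"
    and \<psi> :: "nat \<Rightarrow> 'a \<Rightarrow> complex"
    and f :: "nat \<Rightarrow> 'a \<Rightarrow> complex"
    and n :: nat and \<Omega> :: nat
  assumes "sets M = sets borel"
    and "koopman_L2_bounded M T"
    and "orthonormal_basis_L2 M \<psi>"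
    and "\<forall>j<n. f j \<in> L2 M"
    and "\<Omega> \<ge> 1"
  shows "(\<lambda>N. (SUP i\<in>{1..\<Omega>}. vnorm M n (\<lambda>j x.
              ((koopmanN M \<psi> T N ^^ i) (projN M \<psi> N (f j))) x - ((koopman T ^^ i) (f j)) x)))
           \<longlonglongrightarrow> 0
       \<and> ((\<exists>N\<^sub>0. \<forall>j<n. inFN M \<psi> N\<^sub>0 (f j)) \<longrightarrow>
          (\<lambda>N. (SUP i\<in>{1..\<Omega>}. vnorm M n (\<lambda>j x.
              ((koopmanN M \<psi> T N ^^ i) (f j)) x - ((koopman T ^^ i) (f j)) x)))
           \<longlonglongrightarrow> 0)"
proof -
  have ob: "orthonormal_basis_L2 M \<psi>" by (rule assms(3))
  have A: "\<forall>i. \<psi> i \<in> L2 M" "\<forall>i j. l2inner M (\<psi> i) (\<psi> j) = (if i = j then 1 else 0)"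
    using ob unfolding orthonormal_basis_L2_def by auto
  have KL: "\<forall>\<phi>\<in>L2 M. koopman T \<phi> \<in> L2 M"
    and Kae: "\<forall>\<phi>\<in>L2 M. \<forall>\<psi>\<in>L2 M. (AE x in M. \<phi> x = \<psi> x) \<longrightarrow> (AE x in M. koopman T \<phi> x = koopman T \<psi> x)"
    using assms(2) unfolding koopman_L2_bounded_def by auto
  obtain C where C: "\<forall>\<phi>\<in>L2 M. l2norm M (koopman T \<phi>) \<le> C * l2norm M \<phi>"
    using assms(2) unfolding koopman_L2_bounded_def by auto
  define C' where "C' = max C 0"
  have ln0: "0 \<le> l2norm M g" for g by (simp add: l2norm_nsq nsq_nonneg)
  have Cb: "\<forall>\<phi>\<in>L2 M. nsq M (koopman T \<phi>) \<le> C'\<^sup>2 * nsq M \<phi>"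
  proof
    fix \<phi> assume p: "\<phi> \<in> L2 M"
    have "l2norm M (koopman T \<phi>) \<le> C * l2norm M \<phi>" using C p by auto
    also have "\<dots> \<le> C' * l2norm M \<phi>" unfolding C'_def by (intro mult_right_mono ln0) simp
    finally have "(l2norm M (koopman T \<phi>))\<^sup>2 \<le> (C' * l2norm M \<phi>)\<^sup>2"
      by (intro power_mono ln0)
    then show "nsq M (koopman T \<phi>) \<le> C'\<^sup>2 * nsq M \<phi>"
      by (simp add: nsq_l2norm power_mult_distrib)
  qed
  have C0: "0 \<le> C'\<^sup>2" by simp
  have conv: "(\<lambda>N. l2norm M (\<lambda>x. ((koopmanN M \<psi> T N ^^ i) (projN M \<psi> N (f j))) x - ((koopman T ^^ i) (f j)) x)) \<longlonglongrightarrow> 0"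
    if "j < n" for i j
  proof -
    have "(\<lambda>N. nsq M (\<lambda>x. ((koopmanN M \<psi> T N ^^ i) (projN M \<psi> N (f j))) x - ((koopman T ^^ i) (f j)) x)) \<longlonglongrightarrow> 0"
      using main_conv[OF ob KL Cb C0, of "f j" i] assms(4) that by auto
    from tendsto_real_sqrt[OF this] show ?thesis by (simp add: l2norm_nsq)
  qed
  have vconv: "(\<lambda>N. vnorm M n (\<lambda>j x. ((koopmanN M \<psi> T N ^^ i) (projN M \<psi> N (f j))) x - ((koopman T ^^ i) (f j)) x)) \<longlonglongrightarrow> 0" for i
  proof -
    have "(\<lambda>N. \<Sum>j<n. l2norm M (\<lambda>x. ((koopmanN M \<psi> T N ^^ i) (projN M \<psi> N (f j))) x - ((koopman T ^^ i) (f j)) x)) \<longlonglongrightarrow> (\<Sum>j<n. 0)"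
      by (rule tendsto_sum) (use conv in auto)
    then show ?thesis by (simp add: vnorm_def)
  qed
  have vn0: "0 \<le> vnorm M n g" for g unfolding vnorm_def by (intro sum_nonneg ln0)
  have ne: "{1..\<Omega>} \<noteq> {}" using assms(5) by simp
  have part1: "(\<lambda>N. (SUP i\<in>{1..\<Omega>}. vnorm M n (\<lambda>j x.
              ((koopmanN M \<psi> T N ^^ i) (projN M \<psi> N (f j))) x - ((koopman T ^^ i) (f j)) x)))
           \<longlonglongrightarrow> 0"
    by (rule sup_lim[OF _ ne]) (auto intro: vconv vn0)
  show ?thesis
  proof (intro conjI impI part1)
    assume "\<exists>N\<^sub>0. \<forall>j<n. inFN M \<psi> N\<^sub>0 (f j)"
    then obtain N0 where N0: "\<forall>j<n. inFN M \<psi> N0 (f j)" by auto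
    have "\<forall>j. \<exists>c. j < n \<longrightarrow> (AE x in M. f j x = (\<Sum>i<N0. c i * \<psi> i x))"
      using N0 unfolding inFN_def by blast
    then obtain c where c: "\<And>j. j < n \<Longrightarrow> AE x in M. f j x = (\<Sum>i<N0. c j i * \<psi> i x)"
      by metis
    have ev: "\<forall>\<^sub>F N in sequentially.
        (SUP i\<in>{1..\<Omega>}. vnorm M n (\<lambda>j x.
              ((koopmanN M \<psi> T N ^^ i) (projN M \<psi> N (f j))) x - ((koopman T ^^ i) (f j)) x))
      = (SUP i\<in>{1..\<Omega>}. vnorm M n (\<lambda>j x.
              ((koopmanN M \<psi> T N ^^ i) (f j)) x - ((koopman T ^^ i) (f j)) x))"
    proof (rule eventually_sequentiallyI)
      fix N assume N: "N0 \<le> N"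
      have it: "(koopmanN M \<psi> T N ^^ i) (f j) = (koopmanN M \<psi> T N ^^ i) (projN M \<psi> N (f j))"
        if jn: "j < n" and iO: "i \<in> {1..\<Omega>}" for i j
      proof -
        obtain m where m: "i = Suc m" using iO by (cases i) auto
        have fL: "f j \<in> L2 M" using assms(4) jn by auto
        have "koopmanN M \<psi> T N (f j) = koopmanN M \<psi> T N (projN M \<psi> N (f j))"
          by (rule koopN_cong[OF A(1) KL Kae fL proj_L2[OF A(1)] ae_proj[OF A fL c[OF jn] N]])
        then show ?thesis unfolding m funpow_Suc_right by simp
      qed
      show "(SUP i\<in>{1..\<Omega>}. vnorm M n (\<lambda>j x.
              ((koopmanN M \<psi> T N ^^ i) (projN M \<psi> N (f j))) x - ((koopman T ^^ i) (f j)) x))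
      = (SUP i\<in>{1..\<Omega>}. vnorm M n (\<lambda>j x.
              ((koopmanN M \<psi> T N ^^ i) (f j)) x - ((koopman T ^^ i) (f j)) x))"
        unfolding vnorm_def by (intro SUP_cong refl sum.cong) (simp_all add: it)
    qed
    show "(\<lambda>N. (SUP i\<in>{1..\<Omega>}. vnorm M n (\<lambda>j x.
              ((koopmanN M \<psi> T N ^^ i) (f j)) x - ((koopman T ^^ i) (f j)) x)))
           \<longlonglongrightarrow> 0"
      using part1 tendsto_cong[OF ev] by simp
  qed
qed

end
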